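(* Let $q$ be a prime power, $n\le m$ and $r\le\min\{n,m\}$. Let $\mathcal M$ be a set of $r$-dimensional subspaces of $\mathbb F_q^m$ with minimum subspace distance $d_{S,M}$, and let $\mathcal N$ be a set of $r$-dimensional subspaces of $\mathbb F_q^n$ with minimum subspace distance $d_{S,N}$. Then there exists a constant-rank code $\mathcal C$, i.e. a set of $m\times n$ matrices over $\mathbb F_q$ all of rank exactly $r$, of cardinality $\min\{|\mathcal M|,|\mathcal N|\}$, such that the column space of every element of $\mathcal C$ lies in $\mathcal M$ and the row space of every element of $\mathcal C$ lies in $\mathcal N$, and whose minimum rank distance $d_R$ satisfies $$d_R\ge\tfrac12 d_{S,M}+\tfrac12 d_{S,N};$$ and if moreover $|\mathcal M|=|\mathcal N|$, then additionally $d_R\le \tfrac12\min\{d_{S,M},d_{S,N}\}+r$.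
   Context: For subspaces $U,V$ of $\mathbb F_q^N$, the subspace distance is $d_S(U,V)=\dim(U+V)-\dim(U\cap V)$; the minimum subspace distance of a set of subspaces is the minimum of $d_S$ over pairs of distinct elements. The rank distance of two matrices $\mathbf X,\mathbf Y$ is $\mathrm{rk}(\mathbf X-\mathbf Y)$, and the minimum rank distance of a set of matrices is its minimum over distinct pairs. The column space of an $m\times n$ matrix is a subspace of $\mathbb F_q^m$, its row space a subspace of $\mathbb F_q^n$. *)

theory Defs
  imports "HOL-Analysis.Analysis" "HOL-Library.Extended_Nat"
begin

definition subspace_sum :: "('a::field^'k) set \<Rightarrow> ('a^'k) set \<Rightarrow> ('a^'k) set" where
  "subspace_sum U V = {u + v | u v. u \<in> U \<and> v \<in> V}"

definition subspace_dist :: "('a::field^'k) set \<Rightarrow> ('a^'k) set \<Rightarrow> nat" where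
  "subspace_dist U V = vec.dim (subspace_sum U V) - vec.dim (U \<inter> V)"

text \<open>Minimum distance, valued in enat; it is infinity for sets with fewer than two elements.\<close>
definition min_dist :: "('b \<Rightarrow> 'b \<Rightarrow> nat) \<Rightarrow> 'b set \<Rightarrow> enat" where
  "min_dist d S = (INF p \<in> {(x, y). x \<in> S \<and> y \<in> S \<and> x \<noteq> y}. enat (d (fst p) (snd p)))"

definition min_subspace_dist :: "('a::field^'k) set set \<Rightarrow> enat" where
  "min_subspace_dist S = min_dist subspace_dist S"

definition rank_dist :: "'a::field^'n^'m \<Rightarrow> 'a^'n^'m \<Rightarrow> nat" where
  "rank_dist X Y = rank (X - Y)"

definition min_rank_dist :: "('a::field^'n^'m) set \<Rightarrow> enat" where
  "min_rank_dist C = min_dist rank_dist C"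

definition col_space :: "'a::field^'n^'m \<Rightarrow> ('a^'m) set" where
  "col_space A = vec.span (columns A)"

definition row_space :: "'a::field^'n^'m \<Rightarrow> ('a^'n) set" where
  "row_space A = vec.span (rows A)"

end

theory Submission imports Defs begin

lemma col_span_range:
  fixes A :: "'a::field^'n^'m"
  shows "vec.span (columns A) = range ((*v) A)"
proof
  show "vec.span (columns A) \<subseteq> range ((*v) A)"
  proof (rule vec.span_minimal)
    show "columns A \<subseteq> range ((*v) A)"
    proof
      fix c assume "c \<in> columns A"
      then obtain j where c: "c = column j A" by (auto simp: columns_def)
      have "A *v axis j 1 = column j A"
        by (simp add: matrix_vector_mult_def column_def axis_def vec_eq_iff if_distrib cong: if_cong)
      then show "c \<in> range ((*v) A)" using c by (metis rangeI)
    qed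
    show "vec.subspace (range ((*v) A))"
      using vec.subspace_image[OF vec.subspace_UNIV] by blast
  qed
  show "range ((*v) A) \<subseteq> vec.span (columns A)"
    using matrix_vector_mult_in_columnspace_gen by blast
qed

lemma dim_rows_le_columns:
  fixes A :: "'a::field^'n^'m"
  shows "vec.dim (rows A) \<le> vec.dim (columns A)"
proof -
  obtain B where B: "B \<subseteq> vec.span (columns A)" "vec.independent B"
      "vec.span (columns A) \<subseteq> vec.span B" "card B = vec.dim (vec.span (columns A))"
    using vec.basis_exists by blast
  have fB: "finite B" using B(2) vec.finiteI_independent by blast
  have "\<forall>j. \<exists>c. column j A = (\<Sum>b\<in>B. c b *s b)"
  proof
    fix j
    have "column j A \<in> vec.span B"
      using B(3) vec.span_base[of "column j A" "columns A"] by (auto simp: columns_def)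
    then show "\<exists>c. column j A = (\<Sum>b\<in>B. c b *s b)"
      using vec.span_finite[OF fB] by auto
  qed
  then obtain c where c: "\<And>j. column j A = (\<Sum>b\<in>B. c j b *s b)" by metis
  define W where "W = (\<lambda>b. \<chi> j. c j b) ` B"
  have "rows A \<subseteq> vec.span W"
  proof
    fix x assume "x \<in> rows A"
    then obtain i where x: "x = row i A" by (auto simp: rows_def)
    have "x = (\<Sum>b\<in>B. (b $ i) *s (\<chi> j. c j b))"
    proof (subst vec_eq_iff, intro allI)
      fix j
      have "A $ i $ j = (column j A) $ i" by (simp add: column_def)
      also have "\<dots> = (\<Sum>b\<in>B. c j b * b $ i)" by (subst c) (simp add: sum_component)
      finally show "x $ j = (\<Sum>b\<in>B. (b $ i) *s (\<chi> j. c j b)) $ j"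
        by (simp add: x row_def sum_component mult.commute)
    qed
    also have "\<dots> \<in> vec.span W"
      by (intro vec.span_sum vec.span_scale vec.span_base) (auto simp: W_def)
    finally show "x \<in> vec.span W" .
  qed
  then have "vec.dim (rows A) \<le> card W" using vec.dim_le_card fB W_def by blast
  also have "\<dots> \<le> card B" unfolding W_def using card_image_le fB by blast
  finally show ?thesis using B(4) by simp
qed

lemma rank_columns:
  fixes A :: "'a::field^'n^'m"
  shows "rank A = vec.dim (columns A)"
  using dim_rows_le_columns[of A] dim_rows_le_columns[of "transpose A"]
  by (simp add: row_rank_def_gen)

lemma rank_range:
  fixes A :: "'a::field^'n^'m"
  shows "rank A = vec.dim (range ((*v) A))"
  by (metis rank_columns col_span_range vec.dim_span)

lemma kerA_subspace: "vec.subspace {x. (A::'a::field^'n^'m) *v x = 0}"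
  unfolding vec.subspace_def
  by (simp add: matrix_vector_right_distrib vec.scale)

lemma rank_nullity_sub:
  fixes A :: "'a::field^'n^'m"
  assumes S: "vec.subspace S"
  shows "vec.dim S = vec.dim (S \<inter> {x. A *v x = 0}) + vec.dim ((*v) A ` S)"
proof -
  let ?K = "S \<inter> {x. A *v x = 0}"
  obtain B0 where B0: "B0 \<subseteq> ?K" "vec.independent B0" "?K \<subseteq> vec.span B0" "card B0 = vec.dim ?K"
    using vec.basis_exists by blast
  obtain B where B: "B0 \<subseteq> B" "B \<subseteq> S" "vec.independent B" "S \<subseteq> vec.span B"
    using vec.maximal_independent_subset_extend[of B0 S] B0 by blast
  have fB: "finite B" using B(3) vec.finiteI_independent by blast
  have spB: "vec.span B = S" using vec.span_minimal[OF B(2) S] B(4) by blast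
  let ?E = "B - B0"
  have indE: "vec.independent ?E" using B(3) vec.independent_mono by blast
  have cardB: "card B = card ?E + card B0"
    using card_Diff_subset[OF finite_subset[OF B(1) fB] B(1)] card_mono[OF fB B(1)] by simp
  have dimS: "vec.dim S = card B"
    using vec.dim_span_eq_card_independent[OF B(3)] spB by simp
  have sum_eq: "{x + y |x y. x \<in> vec.span ?E \<and> y \<in> vec.span B0} = vec.span B"
  proof -
    have "?E \<union> B0 = B" using B(1) by blast
    then show ?thesis using vec.span_Un[of ?E B0] by simp
  qed
  have "vec.dim (vec.span B) + vec.dim (vec.span ?E \<inter> vec.span B0) = vec.dim (vec.span ?E) + vec.dim (vec.span B0)"
    using vec.dim_sums_Int[of "vec.span ?E" "vec.span B0"] sum_eq by simp
  moreover have "vec.dim (vec.span ?E) = card ?E" by (rule vec.dim_span_eq_card_independent[OF indE])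
  moreover have "vec.dim (vec.span B0) = card B0" by (rule vec.dim_span_eq_card_independent[OF B0(2)])
  moreover have "vec.dim (vec.span B) = card B" by (rule vec.dim_span_eq_card_independent[OF B(3)])
  ultimately have "vec.dim (vec.span ?E \<inter> vec.span B0) = 0" using cardB by linarith
  then have disj: "vec.span ?E \<inter> vec.span B0 \<subseteq> {0}" by (simp only: vec.dim_eq_0)
  have inj: "inj_on ((*v) A) (vec.span ?E)"
  proof (subst vec.inj_on_iff_eq_0[OF vec.subspace_span], intro ballI impI)
    fix x assume x: "x \<in> vec.span ?E" "A *v x = 0"
    have "x \<in> S" using x(1) vec.span_mono[of ?E B] spB by blast
    then have "x \<in> vec.span B0" using x(2) B0(3) by blast
    then show "x = 0" using disj x(1) by blast
  qed
  have img: "(*v) A ` S = (*v) A ` vec.span ?E"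
  proof
    show "(*v) A ` vec.span ?E \<subseteq> (*v) A ` S" using vec.span_mono[of ?E B] spB by blast
    show "(*v) A ` S \<subseteq> (*v) A ` vec.span ?E"
    proof
      fix y assume "y \<in> (*v) A ` S"
      then obtain x where x: "x \<in> S" "y = A *v x" by blast
      then have "x \<in> vec.span (?E \<union> B0)" using spB B(1) by (metis Un_Diff_cancel2 sup.absorb1)
      then obtain e z where ez: "x = e + z" "e \<in> vec.span ?E" "z \<in> vec.span B0"
        using vec.span_Un by blast
      have "vec.subspace ?K" using vec.subspace_inter[OF S kerA_subspace[of A]] by simp
      then have "z \<in> ?K" using ez(3) B0(1) vec.span_minimal[of B0 ?K] by blast
      then have "A *v x = A *v e" using ez(1) by (simp add: matrix_vector_right_distrib)
      then show "y \<in> (*v) A ` vec.span ?E" using x ez by blast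
    qed
  qed
  have "vec.dim ((*v) A ` S) = card ?E"
    using img vec.dim_image_eq[OF matrix_vector_mul_linear_gen, of A "vec.span ?E"] inj
      vec.dim_span_eq_card_independent[OF indE] by (simp add: vec.span_span)
  then show ?thesis using dimS cardB B0(4) by simp
qed

lemma rank_nullity_UNIV:
  fixes A :: "'a::field^'n^'m"
  shows "rank A + vec.dim {x. A *v x = 0} = CARD('n)"
  using rank_nullity_sub[OF vec.subspace_UNIV, of A] rank_range[of A]
  by (simp add: card_cart_basis)

lemma construct_matrix:
  fixes U :: "('a::field^'m) set" and V :: "('a^'n) set"
  assumes U: "vec.subspace U" "vec.dim U = r" and V: "vec.subspace V" "vec.dim V = r"
    and rn: "r \<le> CARD('n)"
  shows "\<exists>X :: 'a^'n^'m. rank X = r \<and> col_space X = U \<and> row_space X = V"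
proof -
  obtain I :: "'n set" where I: "card I = r" "finite I"
    using obtain_subset_with_card_n[OF rn] by (metis finite)
  obtain BU where BU: "BU \<subseteq> U" "vec.independent BU" "U \<subseteq> vec.span BU" "card BU = vec.dim U"
    using vec.basis_exists by blast
  obtain BV where BV: "BV \<subseteq> V" "vec.independent BV" "V \<subseteq> vec.span BV" "card BV = vec.dim V"
    using vec.basis_exists by blast
  have fBU: "finite BU" using BU(2) vec.finiteI_independent by blast
  have fBV: "finite BV" using BV(2) vec.finiteI_independent by blast
  obtain fu where fu: "bij_betw fu I BU" using finite_same_card_bij[OF I(2) fBU] I BU U by auto
  obtain fv where fv: "bij_betw fv I BV" using finite_same_card_bij[OF I(2) fBV] I BV V by auto
  define R :: "'a^'n^'n" where "R = (\<chi> i. if i \<in> I then fv i else 0)"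
  define C :: "'a^'n^'m" where "C = (\<chi> k i. if i \<in> I then fu i $ k else 0)"
  define X where "X = C ** R"
  have spU: "vec.span BU = U" using vec.span_minimal[OF BU(1) U(1)] BU(3) by blast
  have spV: "vec.span BV = V" using vec.span_minimal[OF BV(1) V(1)] BV(3) by blast
  have Cv: "C *v y = (\<Sum>i\<in>I. y $ i *s fu i)" for y
  proof -
    have "C *v y = (\<Sum>i\<in>UNIV. y $ i *s column i C)" by (rule matrix_mult_sum)
    also have "\<dots> = (\<Sum>i\<in>UNIV. if i \<in> I then y $ i *s fu i else 0)"
      by (intro sum.cong refl) (auto simp: column_def C_def vec_eq_iff)
    also have "\<dots> = (\<Sum>i\<in>I. y $ i *s fu i)" by (simp add: sum.If_cases)
    finally show ?thesis .
  qed
  have rowsR: "BV \<subseteq> rows R" "rows R \<subseteq> insert 0 BV"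
  proof -
    show "BV \<subseteq> rows R"
    proof
      fix b assume "b \<in> BV"
      then obtain i where "i \<in> I" "b = fv i" using fv by (auto simp: bij_betw_def)
      then have "b = row i R" by (simp add: R_def row_def vec_eq_iff)
      then show "b \<in> rows R" by (auto simp: rows_def)
    qed
    show "rows R \<subseteq> insert 0 BV"
      using fv by (auto simp: rows_def row_def R_def bij_betw_def vec_eq_iff)
  qed
  have "vec.dim (rows R) = r"
  proof (rule antisym)
    have "vec.dim (rows R) \<le> vec.dim (insert 0 BV)" by (rule vec.dim_subset[OF rowsR(2)])
    also have "\<dots> = vec.dim BV" by (metis vec.dim_span vec.span_insert_0)
    finally show "vec.dim (rows R) \<le> r" using vec.dim_eq_card_independent[OF BV(2)] BV V by simp
    have "r = vec.dim BV" using vec.dim_eq_card_independent[OF BV(2)] BV V by simp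
    also have "\<dots> \<le> vec.dim (rows R)" by (rule vec.dim_subset[OF rowsR(1)])
    finally show "r \<le> vec.dim (rows R)" .
  qed
  then have dimR: "vec.dim (range ((*v) R)) = r" using rank_range[of R] by (simp add: row_rank_def_gen)
  have rangeR: "range ((*v) R) \<subseteq> {y. \<forall>i. i \<notin> I \<longrightarrow> y $ i = 0}"
    by (auto simp: R_def matrix_vector_mult_def)
  have injC: "inj_on ((*v) C) (range ((*v) R))"
  proof (subst vec.inj_on_iff_eq_0[OF vec.subspace_image[OF vec.subspace_UNIV]], intro ballI impI)
    fix y assume y: "y \<in> range ((*v) R)" "C *v y = 0"
    have z: "\<forall>i. i \<notin> I \<longrightarrow> y $ i = 0" using y(1) rangeR by blast
    let ?g = "the_inv_into I fu"
    have "(\<Sum>b\<in>BU. y $ (?g b) *s b) = (\<Sum>i\<in>I. y $ i *s fu i)"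
      using sum.reindex_bij_betw[OF fu, of "\<lambda>b. y $ (?g b) *s b"] fu
      by (simp add: the_inv_into_f_f bij_betw_def)
    then have s0: "(\<Sum>b\<in>BU. y $ (?g b) *s b) = 0" using y(2) Cv by simp
    have ind: "\<forall>c. (\<Sum>v\<in>BU. c v *s v) = 0 \<longrightarrow> (\<forall>v\<in>BU. c v = 0)"
      using vec.independent_explicit[THEN iffD1, OF BU(2)] by blast
    have "\<forall>b\<in>BU. y $ (?g b) = 0"
      using ind[rule_format, of "\<lambda>b. y $ (?g b)", OF s0] by blast
    then have "\<forall>i\<in>I. y $ i = 0" using fu
      by (metis bij_betw_def bij_betw_imp_surj_on image_eqI the_inv_into_f_f)
    with z show "y = 0" by (auto simp: vec_eq_iff)
  qed
  have rangeX: "range ((*v) X) = (*v) C ` range ((*v) R)"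
    by (auto simp: X_def matrix_vector_mul_assoc[symmetric])
  have spR: "vec.span (range ((*v) R)) = range ((*v) R)"
    using vec.span_eq_iff vec.subspace_image[OF vec.subspace_UNIV] by blast
  have "vec.dim ((*v) C ` range ((*v) R)) = vec.dim (range ((*v) R))"
    by (rule vec.dim_image_eq[OF matrix_vector_mul_linear_gen]) (simp add: spR injC)
  then have rankX: "rank X = r"
    using rank_range[of X] rangeX dimR by simp
  have colX: "col_space X = U"
  proof -
    have cs: "col_space X = range ((*v) X)" by (simp add: col_space_def col_span_range)
    have sub: "range ((*v) X) \<subseteq> U"
    proof
      fix z assume "z \<in> range ((*v) X)"
      then obtain y where "z = C *v y" using rangeX by blast
      then have "z = (\<Sum>i\<in>I. y $ i *s fu i)" using Cv by simp
      also have "\<dots> \<in> vec.span BU"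
        using fu by (intro vec.span_sum vec.span_scale vec.span_base) (auto simp: bij_betw_def)
      finally show "z \<in> U" using spU by simp
    qed
    have "range ((*v) X) = U"
      by (rule vec.subspace_dim_equal[OF vec.subspace_image[OF vec.subspace_UNIV] U(1) sub])
         (use rankX rank_range[of X] U(2) in simp)
    then show ?thesis using cs by simp
  qed
  have rowX: "row_space X = V"
  proof -
    have sub: "rows X \<subseteq> V"
    proof
      fix z assume "z \<in> rows X"
      then obtain k where z: "z = row k X" by (auto simp: rows_def)
      have "z = (\<Sum>i\<in>UNIV. (C $ k $ i) *s R $ i)"
        by (simp add: z row_def X_def matrix_matrix_mult_def vec_eq_iff sum_component)
      also have "\<dots> \<in> V"
      proof (intro vec.subspace_sum[OF V(1)] vec.subspace_scale[OF V(1)])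
        fix i show "R $ i \<in> V"
          using fv BV(1) vec.subspace_0[OF V(1)] by (auto simp: R_def bij_betw_def)
      qed
      finally show "z \<in> V" .
    qed
    have sub2: "vec.span (rows X) \<subseteq> V" by (rule vec.span_minimal[OF sub V(1)])
    show ?thesis unfolding row_space_def
      by (rule vec.subspace_dim_equal[OF vec.subspace_span V(1) sub2])
         (use rankX V(2) in \<open>simp add: row_rank_def_gen\<close>)
  qed
  show ?thesis using rankX colX rowX by blast
qed

lemma span_Un_sum: "vec.span (A \<union> B) = subspace_sum (vec.span A) (vec.span B)"
  by (simp add: vec.span_Un subspace_sum_def)

lemma dim_col_space: "vec.dim (col_space X) = rank X"
  by (simp add: col_space_def rank_columns)

lemma dim_row_space: "vec.dim (row_space X) = rank X"
  by (simp add: row_space_def row_rank_def_gen)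

lemma dim_sum_int:
  assumes "vec.subspace S" "vec.subspace T"
  shows "vec.dim (subspace_sum S T) + vec.dim (S \<inter> T) = vec.dim S + vec.dim T"
  using vec.dim_sums_Int[OF assms] by (simp add: subspace_sum_def)

lemma rank_diff_upper:
  fixes X Y :: "'a::field^'n^'m"
  shows "rank (X - Y) \<le> vec.dim (subspace_sum (row_space X) (row_space Y))"
    and "rank (X - Y) \<le> vec.dim (subspace_sum (col_space X) (col_space Y))"
proof -
  have "rows (X - Y) \<subseteq> vec.span (rows X \<union> rows Y)"
  proof
    fix z assume "z \<in> rows (X - Y)"
    then obtain i where z: "z = row i (X - Y)" by (auto simp: rows_def)
    have "z = row i X - row i Y" by (simp add: z row_def vec_eq_iff)
    moreover have "row i X \<in> vec.span (rows X \<union> rows Y)" "row i Y \<in> vec.span (rows X \<union> rows Y)"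
      by (auto intro!: vec.span_base simp: rows_def)
    ultimately show "z \<in> vec.span (rows X \<union> rows Y)" using vec.span_diff by simp
  qed
  then have "rank (X - Y) \<le> vec.dim (vec.span (rows X \<union> rows Y))"
    unfolding row_rank_def_gen by (rule vec.dim_subset)
  then show "rank (X - Y) \<le> vec.dim (subspace_sum (row_space X) (row_space Y))"
    by (simp add: span_Un_sum row_space_def)
  have "columns (X - Y) \<subseteq> vec.span (columns X \<union> columns Y)"
  proof
    fix z assume "z \<in> columns (X - Y)"
    then obtain i where z: "z = column i (X - Y)" by (auto simp: columns_def)
    have "z = column i X - column i Y" by (simp add: z column_def vec_eq_iff)
    moreover have "column i X \<in> vec.span (columns X \<union> columns Y)" "column i Y \<in> vec.span (columns X \<union> columns Y)"
      by (auto intro!: vec.span_base simp: columns_def)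
    ultimately show "z \<in> vec.span (columns X \<union> columns Y)" using vec.span_diff by simp
  qed
  then have "rank (X - Y) \<le> vec.dim (vec.span (columns X \<union> columns Y))"
    unfolding rank_columns by (rule vec.dim_subset)
  then show "rank (X - Y) \<le> vec.dim (subspace_sum (col_space X) (col_space Y))"
    by (simp add: span_Un_sum col_space_def)
qed

lemma dim_common_kernel:
  fixes X Y :: "'a::field^'n^'m"
  shows "vec.dim {x. X *v x = 0 \<and> Y *v x = 0} + vec.dim (subspace_sum (row_space X) (row_space Y)) = CARD('n)"
proof -
  define Z :: "'a^'n^('m + 'm)" where "Z = (\<chi> i. case i of Inl j \<Rightarrow> X $ j | Inr j \<Rightarrow> Y $ j)"
  have ker: "{x. Z *v x = 0} = {x. X *v x = 0 \<and> Y *v x = 0}"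
  proof -
    have "Z *v x = 0 \<longleftrightarrow> X *v x = 0 \<and> Y *v x = 0" for x
    proof -
      have "(Z *v x) $ Inl j = (X *v x) $ j" "(Z *v x) $ Inr j = (Y *v x) $ j" for j
        by (simp_all add: Z_def matrix_vector_mult_def)
      then show ?thesis unfolding vec_eq_iff by (metis sum.exhaust zero_index)
    qed
    then show ?thesis by blast
  qed
  have rowsZ: "rows Z = rows X \<union> rows Y"
  proof -
    have "row (Inl j) Z = row j X" "row (Inr j) Z = row j Y" for j
      by (simp_all add: Z_def row_def)
    then show ?thesis unfolding rows_def by (auto, metis sum.exhaust) (metis)+
  qed
  have "rank Z = vec.dim (subspace_sum (row_space X) (row_space Y))"
    unfolding row_rank_def_gen rowsZ
    by (metis span_Un_sum row_space_def vec.dim_span)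
  then show ?thesis using rank_nullity_UNIV[of Z] ker by simp
qed

lemma rank_diff_lower:
  fixes X Y :: "'a::field^'n^'m"
  assumes "rank X = r" "rank Y = r"
  shows "vec.dim (subspace_sum (col_space X) (col_space Y))
       + vec.dim (subspace_sum (row_space X) (row_space Y)) \<le> rank (X - Y) + 2 * r"
proof -
  let ?D = "X - Y"
  let ?kD = "{x. ?D *v x = 0}"
  let ?K = "{x. X *v x = 0 \<and> Y *v x = 0}"
  have a: "rank ?D + vec.dim ?kD = CARD('n)" by (rule rank_nullity_UNIV)
  have b: "vec.dim ?kD = vec.dim (?kD \<inter> {x. X *v x = 0}) + vec.dim ((*v) X ` ?kD)"
    by (rule rank_nullity_sub[OF kerA_subspace])
  have kk: "?kD \<inter> {x. X *v x = 0} = ?K"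
    by (auto simp: matrix_vector_mult_diff_rdistrib)
  have csX: "col_space X = range ((*v) X)" "col_space Y = range ((*v) Y)"
    by (simp_all add: col_space_def col_span_range)
  have "(*v) X ` ?kD \<subseteq> col_space X \<inter> col_space Y"
  proof
    fix z assume "z \<in> (*v) X ` ?kD"
    then obtain x where x: "z = X *v x" "(X - Y) *v x = 0" by blast
    then have "X *v x = Y *v x" by (simp add: matrix_vector_mult_diff_rdistrib)
    then show "z \<in> col_space X \<inter> col_space Y" using x csX by (metis IntI rangeI)
  qed
  then have c: "vec.dim ((*v) X ` ?kD) \<le> vec.dim (col_space X \<inter> col_space Y)"
    by (rule vec.dim_subset)
  have d: "vec.dim (subspace_sum (col_space X) (col_space Y)) + vec.dim (col_space X \<inter> col_space Y) = 2 * r"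
    using dim_sum_int[OF vec.subspace_span vec.subspace_span, of "columns X" "columns Y"] assms
    by (simp add: col_space_def[symmetric] dim_col_space)
  have e: "vec.dim ?K + vec.dim (subspace_sum (row_space X) (row_space Y)) = CARD('n)"
    by (rule dim_common_kernel)
  show ?thesis using a b[unfolded kk] c d e by linarith
qed

lemma sd_formula:
  assumes "vec.subspace U" "vec.subspace V" "vec.dim U = r" "vec.dim V = r"
  shows "subspace_dist U V + 2 * r = 2 * vec.dim (subspace_sum U V)"
proof -
  have "U \<inter> V \<subseteq> subspace_sum U V"
    unfolding subspace_sum_def using vec.subspace_0[OF assms(2)] by force
  then have "vec.dim (U \<inter> V) \<le> vec.dim (subspace_sum U V)" by (rule vec.dim_subset)
  then show ?thesis using dim_sum_int[OF assms(1,2)] assms(3,4) unfolding subspace_dist_def by linarith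
qed

lemma min_dist_le:
  assumes "x \<in> S" "y \<in> S" "x \<noteq> y"
  shows "min_dist d S \<le> enat (d x y)"
  unfolding min_dist_def
  by (rule INF_lower2[of "(x, y)"]) (use assms in auto)

lemma min_dist_cases:
  assumes "finite S"
  shows "min_dist d S = \<infinity> \<or> (\<exists>x y. x \<in> S \<and> y \<in> S \<and> x \<noteq> y \<and> min_dist d S = enat (d x y))"
proof (cases "{(x, y). x \<in> S \<and> y \<in> S \<and> x \<noteq> y} = {}")
  case True
  then have "min_dist d S = Inf {}" unfolding min_dist_def by (metis image_empty)
  then show ?thesis by (simp add: top_enat_def)
next
  case False
  let ?P = "{(x, y). x \<in> S \<and> y \<in> S \<and> x \<noteq> y}"
  let ?f = "\<lambda>p. enat (d (fst p) (snd p))"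
  have fin: "finite ?P" by (rule finite_subset[OF _ finite_cartesian_product[OF assms assms]]) auto
  have "Inf (?f ` ?P) = Min (?f ` ?P)" using fin False by (intro cInf_eq_Min) auto
  moreover have "Min (?f ` ?P) \<in> ?f ` ?P" using fin False by (intro Min_in) auto
  ultimately obtain p where "p \<in> ?P" "min_dist d S = ?f p" unfolding min_dist_def by auto
  then show ?thesis by (cases p) auto
qed

lemma min_dist_obtain:
  assumes "finite S" "min_dist d S \<noteq> \<infinity>"
  obtains x y where "x \<in> S" "y \<in> S" "x \<noteq> y" "min_dist d S = enat (d x y)"
  using min_dist_cases[OF assms(1), of d] assms(2) by blast

lemma pairing:
  assumes fM: "finite M" and fN: "finite N"
  shows "\<exists>P. P \<subseteq> M \<times> N \<and> inj_on fst P \<and> inj_on snd P \<and> card P = min (card M) (card N)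
           \<and> (card M = card N \<longrightarrow> fst ` P = M \<and> snd ` P = N)"
proof (cases "card M \<le> card N")
  case True
  obtain f where f: "f ` M \<subseteq> N" "inj_on f M" using card_le_inj[OF fM fN True] by blast
  define P where "P = (\<lambda>U. (U, f U)) ` M"
  have "inj_on (\<lambda>U. (U, f U)) M" by (auto simp: inj_on_def)
  then have cP: "card P = card M" unfolding P_def by (rule card_image)
  have "card (f ` M) = card M" using card_image[OF f(2)] .
  then have "card M = card N \<longrightarrow> f ` M = N" using card_subset_eq[OF fN f(1)] by simp
  moreover have "fst ` P = M" "snd ` P = f ` M" unfolding P_def by (auto simp: image_image)
  moreover have "P \<subseteq> M \<times> N" using f(1) unfolding P_def by auto
  moreover have "inj_on fst P" "inj_on snd P" using f(2) unfolding P_def by (auto simp: inj_on_def)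
  ultimately show ?thesis using cP True by (intro exI[of _ P]) auto
next
  case False
  then have le: "card N \<le> card M" by simp
  obtain f where f: "f ` N \<subseteq> M" "inj_on f N" using card_le_inj[OF fN fM le] by blast
  define P where "P = (\<lambda>V. (f V, V)) ` N"
  have "inj_on (\<lambda>V. (f V, V)) N" by (auto simp: inj_on_def)
  then have cP: "card P = card N" unfolding P_def by (rule card_image)
  moreover have "P \<subseteq> M \<times> N" using f(1) unfolding P_def by auto
  moreover have "inj_on fst P" "inj_on snd P" using f(2) unfolding P_def by (auto simp: inj_on_def)
  ultimately show ?thesis using False by (intro exI[of _ P]) auto
qed

theorem proposition2:
  fixes \<M> :: "('a::{finite,field}^'m) set set"
    and \<N> :: "('a^'n) set set"
    and r :: nat
  assumes "CARD('n) \<le> CARD('m)"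
    and "r \<le> min CARD('n) CARD('m)"
    and "\<forall>U\<in>\<M>. vec.subspace U \<and> vec.dim U = r"
    and "\<forall>V\<in>\<N>. vec.subspace V \<and> vec.dim V = r"
  shows "\<exists>\<C> :: ('a^'n^'m) set.
           (\<forall>X\<in>\<C>. rank X = r) \<and>
           card \<C> = min (card \<M>) (card \<N>) \<and>
           (\<forall>X\<in>\<C>. col_space X \<in> \<M> \<and> row_space X \<in> \<N>) \<and>
           2 * min_rank_dist \<C> \<ge> min_subspace_dist \<M> + min_subspace_dist \<N> \<and>
           (card \<M> = card \<N> \<longrightarrow>
              2 * min_rank_dist \<C> \<le> min (min_subspace_dist \<M>) (min_subspace_dist \<N>) + 2 * enat r)"
proof -
  note MM = assms(3) and NN = assms(4)
  have rn: "r \<le> CARD('n)" using assms(2) by simp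
  have fM: "finite \<M>" by (rule finite_subset[OF subset_UNIV]) simp
  have fN: "finite \<N>" by (rule finite_subset[OF subset_UNIV]) simp
  obtain P where P: "P \<subseteq> \<M> \<times> \<N>" "inj_on fst P" "inj_on snd P" "card P = min (card \<M>) (card \<N>)"
      "card \<M> = card \<N> \<longrightarrow> fst ` P = \<M> \<and> snd ` P = \<N>"
    using pairing[OF fM fN] by blast
  define mk :: "('a^'m) set \<times> ('a^'n) set \<Rightarrow> 'a^'n^'m" where
    "mk p = (SOME X. rank X = r \<and> col_space X = fst p \<and> row_space X = snd p)" for p
  have mk: "rank (mk p) = r \<and> col_space (mk p) = fst p \<and> row_space (mk p) = snd p" if "p \<in> P" for p
  proof -
    have "fst p \<in> \<M>" "snd p \<in> \<N>" using that P(1) by auto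
    then have "\<exists>X :: 'a^'n^'m. rank X = r \<and> col_space X = fst p \<and> row_space X = snd p"
      using construct_matrix[OF _ _ _ _ rn] MM NN by blast
    then show ?thesis unfolding mk_def by (rule someI_ex)
  qed
  define C where "C = mk ` P"
  have injmk: "inj_on mk P"
  proof (rule inj_onI)
    fix p p' assume "p \<in> P" "p' \<in> P" "mk p = mk p'"
    then have "fst p = fst p'" using mk by metis
    then show "p = p'" using P(2) \<open>p \<in> P\<close> \<open>p' \<in> P\<close> by (meson inj_onD)
  qed
  have cardC: "card C = min (card \<M>) (card \<N>)" using card_image[OF injmk] P(4) by (simp add: C_def)
  have fC: "finite C" by (rule finite_subset[OF subset_UNIV]) simp
  have sub: "\<forall>X\<in>C. col_space X \<in> \<M> \<and> row_space X \<in> \<N>" using mk P(1) by (auto simp: C_def)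
  have rk: "\<forall>X\<in>C. rank X = r" using mk by (auto simp: C_def)
  have pairlow: "min_subspace_dist \<M> + min_subspace_dist \<N> \<le> enat (2 * rank_dist X Y)"
    if XY: "X \<in> C" "Y \<in> C" "X \<noteq> Y" for X Y
  proof -
    obtain p p' where pp: "p \<in> P" "p' \<in> P" "X = mk p" "Y = mk p'" using XY by (auto simp: C_def)
    then have "p \<noteq> p'" using XY by auto
    then have ne: "fst p \<noteq> fst p'" "snd p \<noteq> snd p'" using P(2,3) pp(1,2) by (auto dest: inj_onD)
    have mem: "fst p \<in> \<M>" "fst p' \<in> \<M>" "snd p \<in> \<N>" "snd p' \<in> \<N>" using pp P(1) by auto
    have low: "vec.dim (subspace_sum (col_space X) (col_space Y))
       + vec.dim (subspace_sum (row_space X) (row_space Y)) \<le> rank (X - Y) + 2 * r"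
      using rank_diff_lower[of X r Y] mk pp by simp
    have f1: "subspace_dist (fst p) (fst p') + 2 * r = 2 * vec.dim (subspace_sum (col_space X) (col_space Y))"
      using sd_formula[of "fst p" "fst p'" r] MM mem mk pp by simp
    have f2: "subspace_dist (snd p) (snd p') + 2 * r = 2 * vec.dim (subspace_sum (row_space X) (row_space Y))"
      using sd_formula[of "snd p" "snd p'" r] NN mem mk pp by simp
    have A: "subspace_dist (fst p) (fst p') + subspace_dist (snd p) (snd p') \<le> 2 * rank_dist X Y"
      using low f1 f2 unfolding rank_dist_def by linarith
    have B: "min_subspace_dist \<M> \<le> enat (subspace_dist (fst p) (fst p'))"
      unfolding min_subspace_dist_def using min_dist_le[OF mem(1,2) ne(1)] .
    have C: "min_subspace_dist \<N> \<le> enat (subspace_dist (snd p) (snd p'))"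
      unfolding min_subspace_dist_def using min_dist_le[OF mem(3,4) ne(2)] .
    have "min_subspace_dist \<M> + min_subspace_dist \<N> \<le>
          enat (subspace_dist (fst p) (fst p')) + enat (subspace_dist (snd p) (snd p'))"
      by (rule add_mono[OF B C])
    also have "\<dots> \<le> enat (2 * rank_dist X Y)" using A by simp
    finally show ?thesis .
  qed
  have part4: "min_subspace_dist \<M> + min_subspace_dist \<N> \<le> 2 * min_rank_dist C"
  proof (cases "min_dist rank_dist C = \<infinity>")
    case True
    then show ?thesis by (simp add: min_rank_dist_def numeral_eq_enat)
  next
    case False
    obtain X Y where "X \<in> C" "Y \<in> C" "X \<noteq> Y" "min_dist rank_dist C = enat (rank_dist X Y)"
      by (rule min_dist_obtain[OF fC False])
    then show ?thesis using pairlow[of X Y] by (simp add: numeral_eq_enat min_rank_dist_def)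
  qed
  have part5: "2 * min_rank_dist C \<le> min (min_subspace_dist \<M>) (min_subspace_dist \<N>) + 2 * enat r"
    if eq: "card \<M> = card \<N>"
  proof -
    have fsP: "fst ` P = \<M>" "snd ` P = \<N>" using P(5) eq by auto
    have bnd: "2 * min_rank_dist C \<le> enat d + 2 * enat r"
      if h1: "min_dist rank_dist C \<le> enat k" and h2: "2 * k \<le> d + 2 * r" for k d
    proof -
      obtain j where j: "min_rank_dist C = enat j" "j \<le> k"
        using h1 unfolding min_rank_dist_def by (cases "min_dist rank_dist C") auto
      then show ?thesis using h2 by (simp add: numeral_eq_enat)
    qed
    have "2 * min_rank_dist C \<le> min_subspace_dist \<M> + 2 * enat r"
    proof (cases "min_dist subspace_dist \<M> = \<infinity>")
      case True then show ?thesis by (simp add: min_subspace_dist_def)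
    next
      case False
      obtain U U' where UU: "U \<in> \<M>" "U' \<in> \<M>" "U \<noteq> U'" "min_dist subspace_dist \<M> = enat (subspace_dist U U')"
        by (rule min_dist_obtain[OF fM False])
      obtain p p' where pp: "p \<in> P" "p' \<in> P" "fst p = U" "fst p' = U'" using UU fsP by blast
      let ?X = "mk p" and ?Y = "mk p'"
      have cs: "col_space ?X = U" "col_space ?Y = U'" using mk pp by auto
      have XY: "?X \<in> C" "?Y \<in> C" "?X \<noteq> ?Y" using pp cs UU(3) by (auto simp: C_def)
      have "rank (?X - ?Y) \<le> vec.dim (subspace_sum U U')"
        using rank_diff_upper(2)[of ?X ?Y] cs by simp
      moreover have "subspace_dist U U' + 2 * r = 2 * vec.dim (subspace_sum U U')"
        using sd_formula[of U U' r] MM UU by simp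
      ultimately have "2 * rank_dist ?X ?Y \<le> subspace_dist U U' + 2 * r" unfolding rank_dist_def by linarith
      moreover have "min_dist rank_dist C \<le> enat (rank_dist ?X ?Y)" using min_dist_le[OF XY] .
      ultimately show ?thesis using UU(4) bnd by (simp add: min_subspace_dist_def)
    qed
    moreover have "2 * min_rank_dist C \<le> min_subspace_dist \<N> + 2 * enat r"
    proof (cases "min_dist subspace_dist \<N> = \<infinity>")
      case True then show ?thesis by (simp add: min_subspace_dist_def)
    next
      case False
      obtain V V' where VV: "V \<in> \<N>" "V' \<in> \<N>" "V \<noteq> V'" "min_dist subspace_dist \<N> = enat (subspace_dist V V')"
        by (rule min_dist_obtain[OF fN False])
      obtain p p' where pp: "p \<in> P" "p' \<in> P" "snd p = V" "snd p' = V'" using VV fsP by blast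
      let ?X = "mk p" and ?Y = "mk p'"
      have rs: "row_space ?X = V" "row_space ?Y = V'" using mk pp by auto
      have XY: "?X \<in> C" "?Y \<in> C" "?X \<noteq> ?Y" using pp rs VV(3) by (auto simp: C_def)
      have "rank (?X - ?Y) \<le> vec.dim (subspace_sum V V')"
        using rank_diff_upper(1)[of ?X ?Y] rs by simp
      moreover have "subspace_dist V V' + 2 * r = 2 * vec.dim (subspace_sum V V')"
        using sd_formula[of V V' r] NN VV by simp
      ultimately have "2 * rank_dist ?X ?Y \<le> subspace_dist V V' + 2 * r" unfolding rank_dist_def by linarith
      moreover have "min_dist rank_dist C \<le> enat (rank_dist ?X ?Y)" using min_dist_le[OF XY] .
      ultimately show ?thesis using VV(4) bnd by (simp add: min_subspace_dist_def)
    qed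
    ultimately show ?thesis by (auto simp: min_def)
  qed
  show ?thesis using rk cardC sub part4 part5 by blast
qed

end
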